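(* For all $m\geq 2$ and $k\ge 0$, $$H^k_{m,2}=\langle\mathcal{H}^{m}\oplus\mathcal{E}^{0}\rangle^k_{m,1}\quad\text{and}\quad E^k_{m,2}=\sum_{\ell=0}^{m-1}\langle\mathcal{H}^{\ell}\oplus\mathcal{E}^{m-\ell}\rangle^k_{m,1}+\sum_{\ell=0}^{m}\langle\mathcal{H}^{\ell}\oplus\mathcal{E}^{m-\ell}\rangle^{k-1}_{m,1}.$$
   Context: Power domination: for a graph $G=(V,E)$ and $S\subseteq V$, $\mathcal{P}^0(S)=N[S]$ and for $k\ge1$, $\mathcal{P}^k(S)=\mathcal{P}^{k-1}(S)\cup N^*(\mathcal{P}^{k-1}(S))$, where $x\in N^*(A)$ iff some $a\in A$ has $x$ as its only neighbor not in $A$; $\mathcal{P}^\infty(S)$ is the stable value, and $S$ is a power dominating set if $\mathcal{P}^\infty(S)=V$. $T_{m,h}$ is the complete $m$-ary tree of height $h$ rooted at $r$; $T^+_{m,h}$ is $T_{m,h}$ plus a new vertex $r'$ (stem) joined to $r$. For $G=T^+_{m,h}$, a set $S\subseteq V(G)\setminus\{r'\}$ is Type I if it is a power dominating set for $G$; Type II if it is not but $S\cup\{r'\}$ is; Type 0 otherwise. $E^k_{m,h}$ and $H^k_{m,h}$ denote the numbers of Type I and Type II sets of size $k$ for $T^+_{m,h}$ (zero for $k<0$). Define $$\langle\mathcal{H}^{\ell}\oplus\mathcal{E}^{m-\ell}\rangle^k_{m,h}=\sum \binom{m}{\ell}\binom{\ell}{s_0,\dots,s_k}\binom{m-\ell}{t_0,\dots,t_k}\Big(\prod_{j=1}^{\ell}H^{i_j}_{m,h}\Big)\Big(\prod_{j=\ell+1}^{m}E^{i_j}_{m,h}\Big),$$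 the sum over all tuples of nonnegative integers $(i_1,\dots,i_m)$ with $i_1\le\cdots\le i_\ell$, $i_{\ell+1}\le\cdots\le i_m$, and $i_1+\cdots+i_m=k$, where $s_\alpha=|\{j\in[\ell]:i_j=\alpha\}|$ and $t_\beta=|\{j\in[\ell+1,m]:i_j=\beta\}|$ (empty sum $=0$ for $k<0$). *)

theory Defs
  imports Main
begin

definition closed_nbhd :: "'a set \<Rightarrow> ('a \<Rightarrow> 'a \<Rightarrow> bool) \<Rightarrow> 'a set \<Rightarrow> 'a set" where
  "closed_nbhd V E S = S \<union> {x \<in> V. \<exists>s\<in>S. E s x}"

definition nstar :: "'a set \<Rightarrow> ('a \<Rightarrow> 'a \<Rightarrow> bool) \<Rightarrow> 'a set \<Rightarrow> 'a set" where
  "nstar V E A = {x \<in> V. \<exists>a\<in>A. {y \<in> V. E a y} - A = {x}}"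

definition pd_step :: "'a set \<Rightarrow> ('a \<Rightarrow> 'a \<Rightarrow> bool) \<Rightarrow> 'a set \<Rightarrow> 'a set" where
  "pd_step V E A = A \<union> nstar V E A"

definition pd_iter :: "'a set \<Rightarrow> ('a \<Rightarrow> 'a \<Rightarrow> bool) \<Rightarrow> 'a set \<Rightarrow> nat \<Rightarrow> 'a set" where
  "pd_iter V E S k = (pd_step V E ^^ k) (closed_nbhd V E S)"

definition pd_inf :: "'a set \<Rightarrow> ('a \<Rightarrow> 'a \<Rightarrow> bool) \<Rightarrow> 'a set \<Rightarrow> 'a set" where
  "pd_inf V E S = (\<Union>k. pd_iter V E S k)"

definition power_dominating :: "'a set \<Rightarrow> ('a \<Rightarrow> 'a \<Rightarrow> bool) \<Rightarrow> 'a set \<Rightarrow> bool" where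
  "power_dominating V E S \<longleftrightarrow> S \<subseteq> V \<and> pd_inf V E S = V"

text \<open>Vertices: None is the stem r'; Some xs is the tree vertex reached from the root r = Some []
  along the path xs (entries < m, length <= h).\<close>

definition tverts :: "nat \<Rightarrow> nat \<Rightarrow> nat list option set" where
  "tverts m h = insert None (Some ` {xs. length xs \<le> h \<and> set xs \<subseteq> {..<m}})"

definition tadj :: "nat \<Rightarrow> nat \<Rightarrow> nat list option \<Rightarrow> nat list option \<Rightarrow> bool" where
  "tadj m h u v \<longleftrightarrow>
     (u = None \<and> v = Some []) \<or> (u = Some [] \<and> v = None) \<or>
     (\<exists>xs i. i < m \<and> length xs < h \<and> set xs \<subseteq> {..<m} \<and>
        ((u = Some xs \<and> v = Some (xs @ [i])) \<or> (u = Some (xs @ [i]) \<and> v = Some xs)))"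

definition Ecount :: "nat \<Rightarrow> nat \<Rightarrow> nat \<Rightarrow> nat" where
  "Ecount m h k = card {S. S \<subseteq> tverts m h - {None} \<and> card S = k \<and>
                         power_dominating (tverts m h) (tadj m h) S}"

definition Hcount :: "nat \<Rightarrow> nat \<Rightarrow> nat \<Rightarrow> nat" where
  "Hcount m h k = card {S. S \<subseteq> tverts m h - {None} \<and> card S = k \<and>
                         \<not> power_dominating (tverts m h) (tadj m h) S \<and>
                         power_dominating (tverts m h) (tadj m h) (insert None S)}"

definition multinom :: "nat \<Rightarrow> (nat \<Rightarrow> nat) \<Rightarrow> nat \<Rightarrow> nat" where
  "multinom n s K = fact n div (\<Prod>a\<le>K. fact (s a))"

text \<open>Tuples (i_1,...,i_m) as lists of length m; the bound on entries is implied by the sum.\<close>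
definition bracket_tuples :: "nat \<Rightarrow> nat \<Rightarrow> int \<Rightarrow> nat list set" where
  "bracket_tuples m l k = {xs. length xs = m \<and> set xs \<subseteq> {0..nat k} \<and>
      sorted (take l xs) \<and> sorted (drop l xs) \<and> int (sum_list xs) = k}"

text \<open>bracket m h l k = < H^l (+) E^(m-l) >^k_{m,h}; zero (empty sum) for k < 0.\<close>
definition bracket :: "nat \<Rightarrow> nat \<Rightarrow> nat \<Rightarrow> int \<Rightarrow> nat" where
  "bracket m h l k = (\<Sum>xs\<in>bracket_tuples m l k.
      (m choose l)
      * multinom l (\<lambda>a. count_list (take l xs) a) (nat k)
      * multinom (m - l) (\<lambda>b. count_list (drop l xs) b) (nat k)
      * prod_list (map (Hcount m h) (take l xs))
      * prod_list (map (Ecount m h) (drop l xs)))"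

end

theory Submission
  imports Defs "HOL-Combinatorics.Multiset_Permutations" "HOL-Computational_Algebra.Polynomial"
begin



abbreviation nb :: "'a set \<Rightarrow> ('a \<Rightarrow> 'a \<Rightarrow> bool) \<Rightarrow> 'a \<Rightarrow> 'a set" where
  "nb V E a \<equiv> {y \<in> V. E a y}"

lemma pd_iter_Suc: "pd_iter V E S (Suc k) = pd_step V E (pd_iter V E S k)"
  by (simp add: pd_iter_def)

lemma pd_iter_mono1: "pd_iter V E S k \<subseteq> pd_iter V E S (Suc k)"
  by (simp add: pd_iter_Suc pd_step_def)

lemma pd_iter_mono: "k \<le> k' \<Longrightarrow> pd_iter V E S k \<subseteq> pd_iter V E S k'"
  by (metis lift_Suc_mono_le pd_iter_mono1)

lemma pd_inf_upper:
  assumes "closed_nbhd V E S \<subseteq> A" "nstar V E A \<subseteq> A"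
  shows "pd_inf V E S \<subseteq> A"
proof -
  have "pd_iter V E S k \<subseteq> A" for k
  proof (induction k)
    case 0 then show ?case using assms by (simp add: pd_iter_def)
  next
    case (Suc k)
    have "nstar V E (pd_iter V E S k) \<subseteq> A"
    proof
      fix x assume x: "x \<in> nstar V E (pd_iter V E S k)"
      then obtain a where a: "a \<in> pd_iter V E S k" "x \<in> V" "nb V E a - pd_iter V E S k = {x}"
        unfolding nstar_def by blast
      show "x \<in> A"
      proof (rule ccontr)
        assume "x \<notin> A"
        with a Suc have "nb V E a - A = {x}" by blast
        with a Suc have "x \<in> nstar V E A" unfolding nstar_def by blast
        with assms \<open>x \<notin> A\<close> show False by blast
      qed
    qed
    with Suc show ?case by (simp add: pd_iter_Suc pd_step_def)
  qed
  then show ?thesis by (auto simp: pd_inf_def)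
qed

lemma pd_inf_base: "closed_nbhd V E S \<subseteq> pd_inf V E S"
  unfolding pd_inf_def using pd_iter_def[of V E S 0] by auto

lemma pd_inf_S: "s \<in> S \<Longrightarrow> s \<in> pd_inf V E S"
  using pd_inf_base[of V E S] unfolding closed_nbhd_def by blast

lemma pd_inf_N: "s \<in> S \<Longrightarrow> y \<in> V \<Longrightarrow> E s y \<Longrightarrow> y \<in> pd_inf V E S"
  using pd_inf_base[of V E S] unfolding closed_nbhd_def by blast

lemma chain_finite:
  assumes "finite X" "X \<subseteq> (\<Union>k. pd_iter V E S k)"
  shows "\<exists>k. X \<subseteq> pd_iter V E S k"
  using assms
proof (induction X rule: finite_induct)
  case empty then show ?case by simp
next
  case (insert x F)
  then obtain k where k: "F \<subseteq> pd_iter V E S k" by auto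
  from insert obtain k' where k': "x \<in> pd_iter V E S k'" by auto
  have "F \<subseteq> pd_iter V E S (max k k')" using k pd_iter_mono[of k "max k k'" V E S] by auto
  moreover have "x \<in> pd_iter V E S (max k k')" using k' pd_iter_mono[of k' "max k k'" V E S] by auto
  ultimately show ?case by blast
qed

lemma pd_inf_force:
  assumes "finite V" "a \<in> pd_inf V E S" "x \<in> V" "E a x" "nb V E a - {x} \<subseteq> pd_inf V E S"
  shows "x \<in> pd_inf V E S"
proof -
  have "insert a (nb V E a - {x}) \<subseteq> (\<Union>k. pd_iter V E S k)"
    using assms by (auto simp: pd_inf_def)
  then obtain k where k: "insert a (nb V E a - {x}) \<subseteq> pd_iter V E S k"
    using chain_finite[of "insert a (nb V E a - {x})" V E S] assms(1) by auto
  show ?thesis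
  proof (cases "x \<in> pd_iter V E S k")
    case True then show ?thesis by (auto simp: pd_inf_def)
  next
    case False
    then have "nb V E a - pd_iter V E S k = {x}" using k assms by auto
    then have "x \<in> nstar V E (pd_iter V E S k)" using k assms unfolding nstar_def by blast
    then have "x \<in> pd_iter V E S (Suc k)" by (simp add: pd_iter_Suc pd_step_def)
    then show ?thesis by (auto simp: pd_inf_def)
  qed
qed

lemma twin_not_pd:
  assumes sym: "\<And>u v. E u v \<longleftrightarrow> E v u"
    and xV: "x \<in> V" and yV: "y \<in> V" and xy: "x \<noteq> y" and xS: "x \<notin> S" and yS: "y \<notin> S" and wS: "w \<notin> S"
    and nx: "nb V E x = {w}" and ny: "nb V E y = {w}"
  shows "\<not> power_dominating V E S"
proof
  assume pd: "power_dominating V E S"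
  have SV: "S \<subseteq> V" using pd unfolding power_dominating_def by auto
  have nbx: "\<And>s. s \<in> V \<Longrightarrow> E s x \<Longrightarrow> s = w"
  proof -
    fix s assume "s \<in> V" "E s x"
    then have "s \<in> nb V E x" using sym[of s x] by simp
    then show "s = w" using nx by blast
  qed
  have nby: "\<And>s. s \<in> V \<Longrightarrow> E s y \<Longrightarrow> s = w"
  proof -
    fix s assume "s \<in> V" "E s y"
    then have "s \<in> nb V E y" using sym[of s y] by simp
    then show "s = w" using ny by blast
  qed
  let ?A = "V - {x, y}"
  have "closed_nbhd V E S \<subseteq> ?A"
  proof
    fix z assume z: "z \<in> closed_nbhd V E S"
    then have zV: "z \<in> V" using SV unfolding closed_nbhd_def by auto
    show "z \<in> ?A"
    proof (rule ccontr)
      assume "z \<notin> ?A"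
      then have zz: "z = x \<or> z = y" using zV by auto
      from z have "z \<in> S \<or> (\<exists>s\<in>S. E s z)" unfolding closed_nbhd_def by auto
      then show False
      proof
        assume "z \<in> S" then show False using zz xS yS by auto
      next
        assume "\<exists>s\<in>S. E s z"
        then obtain s where "s \<in> S" "E s z" by blast
        then have "s = w" using zz nbx nby SV by blast
        then show False using wS \<open>s \<in> S\<close> by simp
      qed
    qed
  qed
  moreover have "nstar V E ?A \<subseteq> ?A"
  proof
    fix z assume z: "z \<in> nstar V E ?A"
    then obtain a where a: "a \<in> ?A" "z \<in> V" "nb V E a - ?A = {z}" unfolding nstar_def by blast
    show "z \<in> ?A"
    proof (rule ccontr)
      assume "z \<notin> ?A"
      then have zz: "z = x \<or> z = y" using a by auto
      have "E a z" using a by auto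
      then have "a = w" using zz nbx nby a(1) by blast
      have "E x w" "E y w" using nx ny by auto
      then have "E w x" "E w y" using sym[of w x] sym[of w y] by simp_all
      then have "x \<in> nb V E a - ?A" "y \<in> nb V E a - ?A" using \<open>a = w\<close> xV yV by auto
      then have "x = z" "y = z" using a(3) by auto
      with xy show False by simp
    qed
  qed
  ultimately have sub: "pd_inf V E S \<subseteq> ?A" by (rule pd_inf_upper)
  have "pd_inf V E S = V" using pd unfolding power_dominating_def by (rule conjunct2)
  then have "x \<in> pd_inf V E S" using xV by simp
  with sub show False by blast
qed




lemma len_le2: "length xs \<le> 2 \<Longrightarrow> xs = [] \<or> (\<exists>a. xs = [a]) \<or> (\<exists>a b. xs = [a,b])"
  by (cases xs; cases "tl xs"; auto)

lemma tverts2: "tverts m 2 = {None, Some []} \<union> {Some [j] | j. j<m} \<union> {Some [j,a] | j a. j<m \<and> a<m}"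
  unfolding tverts_def using len_le2 by fastforce

lemma len_le1: "length xs \<le> 1 \<Longrightarrow> xs = [] \<or> (\<exists>a. xs = [a])"
  by (cases xs; auto)

lemma tverts1: "tverts m 1 = {None, Some []} \<union> {Some [j] | j. j<m}"
  unfolding tverts_def using len_le1 by fastforce

lemma tadj_sym: "tadj m h u v \<longleftrightarrow> tadj m h v u"
  unfolding tadj_def by blast

lemma tadj_None: "tadj m h None v \<longleftrightarrow> v = Some []"
  unfolding tadj_def by auto

lemma tadj_None2: "tadj m h u None \<longleftrightarrow> u = Some []"
  unfolding tadj_def by auto

lemma tadj_SS: "tadj m h (Some u) (Some v) \<longleftrightarrow>
   (length u < h \<and> set u \<subseteq> {..<m} \<and> (\<exists>i<m. v = u @ [i])) \<or>
   (length v < h \<and> set v \<subseteq> {..<m} \<and> (\<exists>i<m. u = v @ [i]))"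
  unfolding tadj_def by auto

lemma finite_tverts2: "finite (tverts m 2)"
proof -
  have "{Some [j,a] |j a. j<m \<and> a<m} = (\<lambda>(j,a). Some [j,a]) ` ({..<m}\<times>{..<m})" by auto
  then show ?thesis unfolding tverts2 by auto
qed

lemma finite_tverts1: "finite (tverts m 1)"
  unfolding tverts1 by auto

lemma nb2_None: "nb (tverts m 2) (tadj m 2) None = {Some []}"
  unfolding tverts2 by (auto simp: tadj_None)

lemma nb2_root: "nb (tverts m 2) (tadj m 2) (Some []) = insert None {Some [a] | a. a < m}"
  unfolding tverts2 by (auto simp: tadj_SS tadj_None2 tadj_None)

lemma nb2_child: "j < m \<Longrightarrow> nb (tverts m 2) (tadj m 2) (Some [j]) = insert (Some []) {Some [j,a] | a. a < m}"
  unfolding tverts2 by (auto simp: tadj_SS tadj_None2 tadj_None)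

lemma nb2_leaf: "j < m \<Longrightarrow> a < m \<Longrightarrow> nb (tverts m 2) (tadj m 2) (Some [j,a]) = {Some [j]}"
  unfolding tverts2 by (auto simp: tadj_SS tadj_None2 tadj_None)

lemma nb1_None: "nb (tverts m 1) (tadj m 1) None = {Some []}"
  unfolding tverts1 by (auto simp: tadj_None)

lemma nb1_root: "nb (tverts m 1) (tadj m 1) (Some []) = insert None {Some [a] | a. a < m}"
  unfolding tverts1 by (auto simp: tadj_SS tadj_None2 tadj_None)

lemma nb1_leaf: "a < m \<Longrightarrow> nb (tverts m 1) (tadj m 1) (Some [a]) = {Some []}"
  unfolding tverts1 by (auto simp: tadj_SS tadj_None2 tadj_None)




lemma pd_inf_sub: "S \<subseteq> V \<Longrightarrow> pd_inf V E S \<subseteq> V"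
  by (rule pd_inf_upper) (auto simp: closed_nbhd_def nstar_def)

lemma pd_intro: "S \<subseteq> V \<Longrightarrow> V \<subseteq> pd_inf V E S \<Longrightarrow> power_dominating V E S"
  unfolding power_dominating_def using pd_inf_sub[of S V E] by auto

abbreviation "V1 m \<equiv> tverts m 1"
abbreviation "E1 m \<equiv> tadj m 1"
abbreviation "V2 m \<equiv> tverts m 2"
abbreviation "E2 m \<equiv> tadj m 2"

lemma V1_cases: "v \<in> V1 m \<Longrightarrow> v = None \<or> v = Some [] \<or> (\<exists>a<m. v = Some [a])"
  unfolding tverts1 by auto

lemma V2_cases: "v \<in> V2 m \<Longrightarrow> v = None \<or> v = Some [] \<or> (\<exists>j<m. v = Some [j]) \<or> (\<exists>j<m. \<exists>a<m. v = Some [j,a])"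
  unfolding tverts2 by auto

lemma in_V1: "None \<in> V1 m" "Some [] \<in> V1 m" "a < m \<Longrightarrow> Some [a] \<in> V1 m"
  unfolding tverts1 by auto

lemma in_V2: "None \<in> V2 m" "Some [] \<in> V2 m" "j < m \<Longrightarrow> Some [j] \<in> V2 m"
   "j < m \<Longrightarrow> a < m \<Longrightarrow> Some [j,a] \<in> V2 m"
  unfolding tverts2 by auto

lemma adj1: "E1 m (Some []) None" "a < m \<Longrightarrow> E1 m (Some []) (Some [a])" "a < m \<Longrightarrow> E1 m (Some [a]) (Some [])"
  "E1 m None (Some [])"
  using nb1_root[of m] nb1_leaf[of a m] nb1_None[of m] by blast+

lemma adj2: "E2 m (Some []) None" "j < m \<Longrightarrow> E2 m (Some []) (Some [j])" "j < m \<Longrightarrow> E2 m (Some [j]) (Some [])"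
  "E2 m None (Some [])" "j < m \<Longrightarrow> a < m \<Longrightarrow> E2 m (Some [j]) (Some [j,a])"
  "j < m \<Longrightarrow> a < m \<Longrightarrow> E2 m (Some [j,a]) (Some [j])"
  using nb2_root[of m] nb2_child[of j m] nb2_None[of m] nb2_leaf[of j m a] by blast+

lemmas in_V1s = in_V1[unfolded One_nat_def]
lemmas nb1_Nones = nb1_None[unfolded One_nat_def]
lemmas nb1_leafs = nb1_leaf[unfolded One_nat_def]
lemmas nb1_roots = nb1_root[unfolded One_nat_def]
lemmas adj1s = adj1[unfolded One_nat_def]

lemma pd1_iff:
  assumes m: "m \<ge> 2" and S: "S \<subseteq> V1 m - {None}"
  shows "power_dominating (V1 m) (E1 m) S \<longleftrightarrow> Some [] \<in> S \<or> (\<forall>a<m. Some [a] \<in> S)"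
proof
  assume pd: "power_dominating (V1 m) (E1 m) S"
  show "Some [] \<in> S \<or> (\<forall>a<m. Some [a] \<in> S)"
  proof (rule ccontr)
    assume "\<not> ?thesis"
    then obtain a where a: "a < m" "Some [a] \<notin> S" "Some [] \<notin> S" by auto
    have "\<not> power_dominating (V1 m) (E1 m) S"
      apply (rule twin_not_pd[of "E1 m" None "V1 m" "Some [a]" S "Some []"])
      apply (rule tadj_sym)
      using a S by (auto simp: in_V1 nb1_None nb1_leaf in_V1s nb1_Nones nb1_leafs)
    with pd show False by simp
  qed
next
  let ?P = "pd_inf (V1 m) (E1 m) S"
  assume h: "Some [] \<in> S \<or> (\<forall>a<m. Some [a] \<in> S)"
  have SV: "S \<subseteq> V1 m" using S by auto
  have r: "Some [] \<in> ?P"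
    using h pd_inf_S[of "Some []" S] pd_inf_N[of "Some [0]" S "Some []"] m adj1 in_V1 adj1s in_V1s by auto
  have leaves: "Some [a] \<in> ?P" if "a < m" for a
    using h pd_inf_S[of "Some [a]" S] pd_inf_N[of "Some []" S "Some [a]"] that adj1 in_V1 adj1s in_V1s by auto
  have "None \<in> ?P"
    by (rule pd_inf_force[OF finite_tverts1 r]) (use leaves in \<open>auto simp: nb1_root nb1_roots adj1 in_V1 adj1s in_V1s\<close>)
  then have "V1 m \<subseteq> ?P" using r leaves V1_cases by blast
  then show "power_dominating (V1 m) (E1 m) S" using pd_intro SV by blast
qed

lemma pd1N_iff:
  assumes m: "m \<ge> 2" and S: "S \<subseteq> V1 m - {None}"
  shows "power_dominating (V1 m) (E1 m) (insert None S) \<longleftrightarrow>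
     Some [] \<in> S \<or> (\<forall>a<m. \<forall>b<m. Some [a] \<notin> S \<longrightarrow> Some [b] \<notin> S \<longrightarrow> a = b)"
proof
  assume pd: "power_dominating (V1 m) (E1 m) (insert None S)"
  show "Some [] \<in> S \<or> (\<forall>a<m. \<forall>b<m. Some [a] \<notin> S \<longrightarrow> Some [b] \<notin> S \<longrightarrow> a = b)"
  proof (rule ccontr)
    assume "\<not> ?thesis"
    then obtain a b where a: "a < m" "b < m" "a \<noteq> b" "Some [a] \<notin> S" "Some [b] \<notin> S" "Some [] \<notin> S" by auto
    have "\<not> power_dominating (V1 m) (E1 m) (insert None S)"
      apply (rule twin_not_pd[of "E1 m" "Some [a]" "V1 m" "Some [b]" _ "Some []"])
      apply (rule tadj_sym)
      using a S by (auto simp: in_V1 nb1_leaf in_V1s nb1_leafs)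
    with pd show False by simp
  qed
next
  let ?S = "insert None S"
  let ?P = "pd_inf (V1 m) (E1 m) ?S"
  assume h: "Some [] \<in> S \<or> (\<forall>a<m. \<forall>b<m. Some [a] \<notin> S \<longrightarrow> Some [b] \<notin> S \<longrightarrow> a = b)"
  have SV: "?S \<subseteq> V1 m" using S in_V1 by auto
  have r: "Some [] \<in> ?P"
    using pd_inf_N[of None ?S "Some []"] adj1 in_V1 adj1s in_V1s by auto
  have nn: "None \<in> ?P" using pd_inf_S[of None ?S] by auto
  have leaves: "Some [a] \<in> ?P" if a: "a < m" for a
  proof (cases "Some [] \<in> S")
    case True then show ?thesis using pd_inf_N[of "Some []" ?S "Some [a]"] a adj1 in_V1 adj1s in_V1s by auto
  next
    case False
    show ?thesis
    proof (cases "Some [a] \<in> S")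
      case True then show ?thesis using pd_inf_S[of "Some [a]" ?S] by auto
    next
      case nS: False
      have "b \<noteq> a \<Longrightarrow> b < m \<Longrightarrow> Some [b] \<in> ?P" for b
        using h False nS a pd_inf_S[of "Some [b]" ?S] by auto
      then show ?thesis
        by (intro pd_inf_force[OF finite_tverts1 r]) (use nn a in \<open>auto simp: nb1_root nb1_roots adj1 in_V1 adj1s in_V1s\<close>)
    qed
  qed
  have "V1 m \<subseteq> ?P" using r nn leaves V1_cases by blast
  then show "power_dominating (V1 m) (E1 m) ?S" using pd_intro SV by blast
qed




definition cI :: "nat \<Rightarrow> nat list option set \<Rightarrow> nat \<Rightarrow> bool" where
  "cI m S j \<longleftrightarrow> Some [j] \<in> S \<or> (\<forall>a<m. Some [j,a] \<in> S)"

definition cN :: "nat \<Rightarrow> nat list option set \<Rightarrow> nat \<Rightarrow> bool" where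
  "cN m S j \<longleftrightarrow> Some [j] \<in> S \<or> (\<forall>a<m. \<forall>b<m. Some [j,a] \<notin> S \<longrightarrow> Some [j,b] \<notin> S \<longrightarrow> a = b)"

lemma child_ok:
  assumes m: "m \<ge> 2" and j: "j < m" and r: "Some [] \<in> pd_inf (V2 m) (E2 m) T" and c: "cN m T j"
  shows "Some [j] \<in> pd_inf (V2 m) (E2 m) T" "\<And>a. a < m \<Longrightarrow> Some [j,a] \<in> pd_inf (V2 m) (E2 m) T"
proof -
  let ?P = "pd_inf (V2 m) (E2 m) T"
  show cj: "Some [j] \<in> ?P"
  proof (cases "Some [j] \<in> T")
    case True then show ?thesis by (rule pd_inf_S)
  next
    case False
    have m01: "(0::nat) < m" "(1::nat) < m" using m by auto
    have "Some [j,0] \<in> T \<or> Some [j,1] \<in> T"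
    proof (rule ccontr)
      assume "\<not> ?thesis"
      then show False using c False m01 unfolding cN_def by (metis zero_neq_one)
    qed
    then show ?thesis using pd_inf_N[of "Some [j,0]" T "Some [j]"] pd_inf_N[of "Some [j,1]" T "Some [j]"]
        adj2 in_V2 j m by auto
  qed
  fix a assume a: "a < m"
  show "Some [j,a] \<in> ?P"
  proof (cases "Some [j] \<in> T")
    case True then show ?thesis using pd_inf_N[of "Some [j]" T "Some [j,a]"] adj2 in_V2 j a by auto
  next
    case False
    show ?thesis
    proof (cases "Some [j,a] \<in> T")
      case True then show ?thesis by (rule pd_inf_S)
    next
      case nS: False
      have "b \<noteq> a \<Longrightarrow> b < m \<Longrightarrow> Some [j,b] \<in> ?P" for b
        using c False nS a pd_inf_S[of "Some [j,b]" T] unfolding cN_def by auto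
      then show ?thesis
        by (intro pd_inf_force[OF finite_tverts2 cj]) (use r a j in \<open>auto simp: nb2_child adj2 in_V2\<close>)
    qed
  qed
qed

lemma not_cN_not_pd:
  assumes m: "m \<ge> 2" and j: "j < m" and c: "\<not> cN m S j"
  shows "\<not> power_dominating (V2 m) (E2 m) S"
proof -
  obtain a b where a: "a < m" "b < m" "a \<noteq> b" "Some [j,a] \<notin> S" "Some [j,b] \<notin> S" "Some [j] \<notin> S"
    using c unfolding cN_def by auto
  show ?thesis
    apply (rule twin_not_pd[of "E2 m" "Some [j,a]" "V2 m" "Some [j,b]" _ "Some [j]"])
    apply (rule tadj_sym)
    using a j by (auto simp: in_V2 nb2_leaf)
qed

lemma cN_insert: "cN m (insert None S) j = cN m S j"
  unfolding cN_def by auto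

lemma pd2N_iff:
  assumes m: "m \<ge> 2" and S: "S \<subseteq> V2 m - {None}"
  shows "power_dominating (V2 m) (E2 m) (insert None S) \<longleftrightarrow> (\<forall>j<m. cN m S j)"
proof
  assume pd: "power_dominating (V2 m) (E2 m) (insert None S)"
  show "\<forall>j<m. cN m S j"
    using not_cN_not_pd[OF m, of _ "insert None S"] pd cN_insert by blast
next
  let ?S = "insert None S"
  let ?P = "pd_inf (V2 m) (E2 m) ?S"
  assume h: "\<forall>j<m. cN m S j"
  have SV: "?S \<subseteq> V2 m" using S in_V2 by auto
  have r: "Some [] \<in> ?P" using pd_inf_N[of None ?S "Some []"] adj2 in_V2 by auto
  have nn: "None \<in> ?P" using pd_inf_S[of None ?S] by auto
  have ch: "Some [j] \<in> ?P" "Some [j,a] \<in> ?P" if "j < m" "a < m" for j a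
    using child_ok[OF m _ r, of j] h cN_insert that by auto
  have "V2 m \<subseteq> ?P" using r nn ch V2_cases by blast
  then show "power_dominating (V2 m) (E2 m) ?S" using pd_intro SV by blast
qed

lemma pd2_iff:
  assumes m: "m \<ge> 2" and S: "S \<subseteq> V2 m - {None}"
  shows "power_dominating (V2 m) (E2 m) S \<longleftrightarrow> (\<forall>j<m. cN m S j) \<and> (Some [] \<in> S \<or> (\<exists>j<m. cI m S j))"
proof
  assume pd: "power_dominating (V2 m) (E2 m) S"
  have allN: "\<forall>j<m. cN m S j" using not_cN_not_pd[OF m] pd by blast
  moreover have "Some [] \<in> S \<or> (\<exists>j<m. cI m S j)"
  proof (rule ccontr)
    assume "\<not> ?thesis"
    then have rS: "Some [] \<notin> S" and nI: "\<And>j. j < m \<Longrightarrow> \<not> cI m S j" by auto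
    let ?A = "V2 m - {None, Some []} - {Some [j,a] | j a. j<m \<and> a<m \<and> Some [j,a] \<notin> S}"
    have cjS: "Some [j] \<notin> S" if "j < m" for j using nI[OF that] unfolding cI_def by auto
    have miss: "\<exists>a<m. Some [j,a] \<notin> S" if "j < m" for j using nI[OF that] unfolding cI_def by auto
    have "closed_nbhd (V2 m) (E2 m) S \<subseteq> ?A"
    proof
      fix z assume z: "z \<in> closed_nbhd (V2 m) (E2 m) S"
      then consider "z \<in> S" | s where "s \<in> S" "z \<in> nb (V2 m) (E2 m) s" unfolding closed_nbhd_def by auto
      then show "z \<in> ?A"
      proof cases
        case 1 then show ?thesis using S rS by auto
      next
        case 2
        then have "s \<in> V2 m" "s \<noteq> None" "s \<noteq> Some []" using S rS by auto
        then consider j where "j < m" "s = Some [j]" | j a where "j<m" "a<m" "s = Some [j,a]"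
          using V2_cases by blast
        then show ?thesis
        proof cases
          case 1 then show ?thesis using cjS 2 by auto
        next
          case (2 j a) then show ?thesis using \<open>z \<in> nb (V2 m) (E2 m) s\<close> nb2_leaf[of j m a] in_V2 by auto
        qed
      qed
    qed
    moreover have "nstar (V2 m) (E2 m) ?A \<subseteq> ?A"
    proof
      fix z assume z: "z \<in> nstar (V2 m) (E2 m) ?A"
      then obtain a where a: "a \<in> ?A" "z \<in> V2 m" "nb (V2 m) (E2 m) a - ?A = {z}" unfolding nstar_def by blast
      then have "a \<in> V2 m" "a \<noteq> None" "a \<noteq> Some []" by auto
      then consider j where "j < m" "a = Some [j]" | j b where "j<m" "b<m" "a = Some [j,b]"
        using V2_cases by blast
      then show "z \<in> ?A"
      proof cases
        case 1
        obtain b where b: "b < m" "Some [j,b] \<notin> S" using miss 1 by blast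
        have nbj: "nb (V2 m) (E2 m) a = insert (Some []) {Some [j,a] | a. a < m}"
          using 1 nb2_child[of j m] by simp
        have "Some [] \<in> nb (V2 m) (E2 m) a - ?A" unfolding nbj by blast
        moreover have "Some [j,b] \<notin> ?A" using b 1(1) by blast
        then have "Some [j,b] \<in> nb (V2 m) (E2 m) a - ?A" unfolding nbj using b(1) by blast
        ultimately have "Some [] = z" "Some [j,b] = z" using a(3) by blast+
        then have False by (metis list.distinct(1) option.inject)
        then show ?thesis ..
      next
        case (2 j b)
        have "nb (V2 m) (E2 m) a - ?A = {}" using 2 nb2_leaf[of j m b] in_V2 cjS by auto
        with a(3) show ?thesis by auto
      qed
    qed
    ultimately have "pd_inf (V2 m) (E2 m) S \<subseteq> ?A" by (rule pd_inf_upper)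
    moreover have "pd_inf (V2 m) (E2 m) S = V2 m" using pd unfolding power_dominating_def by (rule conjunct2)
    ultimately show False using in_V2(2)[of m] by blast
  qed
  ultimately show "(\<forall>j<m. cN m S j) \<and> (Some [] \<in> S \<or> (\<exists>j<m. cI m S j))" by blast
next
  let ?P = "pd_inf (V2 m) (E2 m) S"
  assume h: "(\<forall>j<m. cN m S j) \<and> (Some [] \<in> S \<or> (\<exists>j<m. cI m S j))"
  have SV: "S \<subseteq> V2 m" using S by auto
  have r: "Some [] \<in> ?P"
  proof (cases "Some [] \<in> S")
    case True then show ?thesis by (rule pd_inf_S)
  next
    case False
    then obtain j where j: "j < m" "cI m S j" using h by auto
    show ?thesis
    proof (cases "Some [j] \<in> S")
      case True then show ?thesis using pd_inf_N[of "Some [j]" S "Some []"] adj2 in_V2 j by auto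
    next
      case nS: False
      then have lv: "\<And>a. a < m \<Longrightarrow> Some [j,a] \<in> ?P" using j pd_inf_S[of _ S] unfolding cI_def by auto
      have cj: "Some [j] \<in> ?P" using lv[of 0] pd_inf_N[of "Some [j,0]" S "Some [j]"] adj2 in_V2 j m nS
        j unfolding cI_def by auto
      show ?thesis
        by (intro pd_inf_force[OF finite_tverts2 cj]) (use lv j in \<open>auto simp: nb2_child adj2 in_V2\<close>)
    qed
  qed
  have ch: "Some [j] \<in> ?P" "Some [j,a] \<in> ?P" if "j < m" "a < m" for j a
    using child_ok[OF m _ r, of j] h that by auto
  have nn: "None \<in> ?P"
    by (intro pd_inf_force[OF finite_tverts2 r]) (use ch in \<open>auto simp: nb2_root adj2 in_V2\<close>)
  have "V2 m \<subseteq> ?P" using r nn ch V2_cases by blast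
  then show "power_dominating (V2 m) (E2 m) S" using pd_intro SV by blast
qed




definition gen :: "'a set set \<Rightarrow> nat poly" where
  "gen F = (\<Sum>S\<in>F. monom 1 (card S))"

lemma coeff_gen: "finite F \<Longrightarrow> coeff (gen F) k = card {S\<in>F. card S = k}"
proof -
  assume "finite F"
  have "coeff (gen F) k = (\<Sum>S\<in>F. if card S = k then 1 else 0)"
    unfolding gen_def coeff_sum by (rule sum.cong) (auto simp: coeff_monom)
  also have "\<dots> = card {S\<in>F. card S = k}"
    using \<open>finite F\<close> by (simp add: sum.If_cases Int_def)
  finally show ?thesis .
qed

lemma gen_union: "finite A \<Longrightarrow> finite B \<Longrightarrow> A \<inter> B = {} \<Longrightarrow> gen (A \<union> B) = gen A + gen B"
  unfolding gen_def by (rule sum.union_disjoint)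

definition fam :: "'i set \<Rightarrow> ('i \<Rightarrow> 'a set) \<Rightarrow> ('i \<Rightarrow> 'a set set) \<Rightarrow> 'a set set" where
  "fam J B F = {S. S \<subseteq> (\<Union>j\<in>J. B j) \<and> (\<forall>j\<in>J. S \<inter> B j \<in> F j)}"

lemma gen_prod:
  assumes "finite J" "\<forall>j\<in>J. finite (B j)" "disjoint_family_on B J" "\<forall>j\<in>J. F j \<subseteq> Pow (B j)"
  shows "gen (fam J B F) = (\<Prod>j\<in>J. gen (F j))"
  using assms
proof (induction J rule: finite_induct)
  case empty
  have "fam {} B F = {{}}" unfolding fam_def by auto
  then show ?case using monom_eq_1 by (simp add: gen_def del: One_nat_def)
next
  case (insert j J)
  have dJ: "disjoint_family_on B J" using insert.prems(2) by (auto simp: disjoint_family_on_def)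
  have IH: "gen (fam J B F) = (\<Prod>j\<in>J. gen (F j))" using insert dJ by auto
  have disj1: "B j \<inter> B i = {}" if "i \<in> J" for i
  proof -
    have "i \<noteq> j" using that insert.hyps(2) by auto
    then show ?thesis using insert.prems(2) that unfolding disjoint_family_on_def by (metis insertCI)
  qed
  have disj: "B j \<inter> (\<Union>i\<in>J. B i) = {}" using disj1 by blast
  have finF: "finite (F j)" using insert.prems by (meson finite_Pow_iff infinite_super insertI1)
  have finB: "finite (\<Union>i\<in>J. B i)" using insert by auto
  have finfam: "finite (fam J B F)"
    by (rule finite_subset[of _ "Pow (\<Union>i\<in>J. B i)"]) (use finB in \<open>auto simp: fam_def\<close>)
  have FjB: "T \<in> F j \<Longrightarrow> T \<subseteq> B j" for T using insert.prems by auto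
  have famsub: "U \<in> fam J B F \<Longrightarrow> U \<subseteq> (\<Union>i\<in>J. B i)" for U by (auto simp: fam_def)
  have eq: "fam (insert j J) B F = (\<lambda>(T,U). T \<union> U) ` (F j \<times> fam J B F)"
  proof (intro equalityI subsetI)
    fix S assume S: "S \<in> fam (insert j J) B F"
    have "S \<inter> (\<Union>i\<in>J. B i) \<in> fam J B F"
    proof -
      have "(S \<inter> (\<Union>i\<in>J. B i)) \<inter> B i = S \<inter> B i" if "i \<in> J" for i using that by auto
      then show ?thesis using S unfolding fam_def by auto
    qed
    moreover have "S \<inter> B j \<in> F j" using S unfolding fam_def by auto
    moreover have "S = (S \<inter> B j) \<union> (S \<inter> (\<Union>i\<in>J. B i))" using S unfolding fam_def by auto
    ultimately show "S \<in> (\<lambda>(T,U). T \<union> U) ` (F j \<times> fam J B F)" by blast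
  next
    fix S assume "S \<in> (\<lambda>(T,U). T \<union> U) ` (F j \<times> fam J B F)"
    then obtain T U where TU: "T \<in> F j" "U \<in> fam J B F" "S = T \<union> U" by auto
    have T: "T \<subseteq> B j" using FjB TU by auto
    have U: "U \<subseteq> (\<Union>i\<in>J. B i)" using famsub TU by auto
    have "S \<inter> B j = T" using T U disj TU by auto
    moreover have "S \<inter> B i = U \<inter> B i" if "i \<in> J" for i
    proof -
      have "T \<inter> B i = {}" using T disj1[OF that] by blast
      then show ?thesis using TU by auto
    qed
    ultimately show "S \<in> fam (insert j J) B F" using TU T U unfolding fam_def by auto
  qed
  have inj: "inj_on (\<lambda>(T,U). T \<union> U) (F j \<times> fam J B F)"
  proof (rule inj_onI, clarify)
    fix T U T' U' assume a: "T \<in> F j" "U \<in> fam J B F" "T' \<in> F j" "U' \<in> fam J B F" "T \<union> U = T' \<union> U'"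
    have "T \<subseteq> B j" "T' \<subseteq> B j" "U \<subseteq> (\<Union>i\<in>J. B i)" "U' \<subseteq> (\<Union>i\<in>J. B i)" using a FjB famsub by auto
    then have "T = (T \<union> U) \<inter> B j" "T' = (T' \<union> U') \<inter> B j"
      "U = (T \<union> U) \<inter> (\<Union>i\<in>J. B i)" "U' = (T' \<union> U') \<inter> (\<Union>i\<in>J. B i)" using disj by auto
    then show "T = T' \<and> U = U'" using a(5) by metis
  qed
  have card_un: "card (T \<union> U) = card T + card U" if "T \<in> F j" "U \<in> fam J B F" for T U
  proof -
    have "T \<subseteq> B j" "U \<subseteq> (\<Union>i\<in>J. B i)" using that FjB famsub by auto
    moreover then have "finite T" "finite U" using insert.prems finB by (auto intro: finite_subset)
    ultimately show ?thesis using disj by (intro card_Un_disjoint) auto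
  qed
  have "gen (fam (insert j J) B F) = (\<Sum>(T,U)\<in>F j \<times> fam J B F. monom 1 (card (T \<union> U)))"
    unfolding eq gen_def by (subst sum.reindex[OF inj]) (simp add: case_prod_unfold)
  also have "\<dots> = (\<Sum>(T,U)\<in>F j \<times> fam J B F. monom 1 (card T) * monom 1 (card U))"
    by (rule sum.cong) (auto simp: card_un mult_monom)
  also have "\<dots> = gen (F j) * gen (fam J B F)"
    unfolding gen_def sum_product sum.cartesian_product by simp
  also have "\<dots> = (\<Prod>j\<in>insert j J. gen (F j))" using IH insert.hyps by simp
  finally show ?case .
qed




definition tup :: "nat \<Rightarrow> nat \<Rightarrow> nat list set" where
  "tup n s = {xs. length xs = n \<and> sum_list xs = s}"

definition stup :: "nat \<Rightarrow> nat \<Rightarrow> nat list set" where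
  "stup n s = {xs \<in> tup n s. sorted xs}"

lemma tup_le: "xs \<in> tup n s \<Longrightarrow> set xs \<subseteq> {..s}"
  unfolding tup_def using member_le_sum_list by fastforce

lemma finite_tup: "finite (tup n s)"
proof (rule finite_subset)
  show "tup n s \<subseteq> {xs. set xs \<subseteq> {..s} \<and> length xs = n}" using tup_le unfolding tup_def by auto
  show "finite {xs. set xs \<subseteq> {..s} \<and> length xs = n}" by (rule finite_lists_length_eq) auto
qed

lemma finite_stup: "finite (stup n s)"
  unfolding stup_def using finite_tup by auto

lemma tup_0: "tup 0 s = (if s = 0 then {[]} else {})"
  unfolding tup_def by auto

lemma tup_Suc: "tup (Suc n) s = (\<Union>i\<in>{..s}. (#) i ` tup n (s - i))"
proof (intro equalityI subsetI)
  fix xs assume "xs \<in> tup (Suc n) s"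
  then obtain i ys where "xs = i # ys" "length ys = n" "i + sum_list ys = s"
    unfolding tup_def by (cases xs) auto
  then show "xs \<in> (\<Union>i\<in>{..s}. (#) i ` tup n (s - i))" unfolding tup_def by force
qed (auto simp: tup_def)

lemma coeff_power: "coeff (p ^ n) s = (\<Sum>xs\<in>tup n s. prod_list (map (coeff p) xs))"
proof (induction n arbitrary: s)
  case 0
  then show ?case by (auto simp: tup_0 coeff_1)
next
  case (Suc n)
  have "coeff (p ^ Suc n) s = (\<Sum>i\<le>s. coeff p i * coeff (p ^ n) (s - i))"
    by (simp add: coeff_mult)
  also have "\<dots> = (\<Sum>i\<le>s. \<Sum>xs\<in>(#) i ` tup n (s - i). prod_list (map (coeff p) xs))"
  proof (rule sum.cong[OF refl])
    fix i
    have "(\<Sum>xs\<in>(#) i ` tup n (s - i). prod_list (map (coeff p) xs))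
        = (\<Sum>xs\<in>tup n (s - i). coeff p i * prod_list (map (coeff p) xs))"
      by (subst sum.reindex) (auto simp: inj_on_def)
    then show "coeff p i * coeff (p ^ n) (s - i) = (\<Sum>xs\<in>(#) i ` tup n (s - i). prod_list (map (coeff p) xs))"
      by (simp add: Suc sum_distrib_left)
  qed
  also have "\<dots> = (\<Sum>xs\<in>tup (Suc n) s. prod_list (map (coeff p) xs))"
    unfolding tup_Suc by (rule sum.UNION_disjoint[symmetric]) (auto simp: finite_tup)
  finally show ?case .
qed

lemma tup_union: "tup n s = (\<Union>ys\<in>stup n s. permutations_of_multiset (mset ys))"
proof (intro equalityI subsetI)
  fix xs assume xs: "xs \<in> tup n s"
  have "sort xs \<in> stup n s" using xs unfolding stup_def tup_def
    by (auto simp: sum_mset_sum_list[symmetric] length_sort)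
  moreover have "xs \<in> permutations_of_multiset (mset (sort xs))"
    by (simp add: permutations_of_multisetI)
  ultimately show "xs \<in> (\<Union>ys\<in>stup n s. permutations_of_multiset (mset ys))" by blast
next
  fix xs assume "xs \<in> (\<Union>ys\<in>stup n s. permutations_of_multiset (mset ys))"
  then obtain ys where ys: "ys \<in> stup n s" "mset xs = mset ys"
    by (auto dest: permutations_of_multisetD)
  then have "length xs = length ys" "sum_list xs = sum_list ys"
    by (metis size_mset) (metis ys(2) sum_mset_sum_list)
  then show "xs \<in> tup n s" using ys unfolding stup_def tup_def by auto
qed

lemma sorted_group:
  "(\<Sum>xs\<in>tup n s. g (mset xs)) = (\<Sum>ys\<in>stup n s. card (permutations_of_multiset (mset ys)) * g (mset ys))"
proof -
  have "(\<Sum>xs\<in>tup n s. g (mset xs)) = (\<Sum>ys\<in>stup n s. \<Sum>xs\<in>permutations_of_multiset (mset ys). g (mset xs))"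
    unfolding tup_union
  proof (rule sum.UNION_disjoint)
    show "finite (stup n s)" by (rule finite_stup)
    show "\<forall>i\<in>stup n s. finite (permutations_of_multiset (mset i))" by simp
    show "\<forall>i\<in>stup n s. \<forall>j\<in>stup n s. i \<noteq> j \<longrightarrow>
        permutations_of_multiset (mset i) \<inter> permutations_of_multiset (mset j) = {}"
    proof (intro ballI impI)
      fix i j assume ij: "i \<in> stup n s" "j \<in> stup n s" "i \<noteq> j"
      have "mset i \<noteq> mset j"
      proof
        assume "mset i = mset j"
        then have "sort j = i" using ij properties_for_sort[of i j] unfolding stup_def by auto
        moreover have "sort j = j" using ij by (simp add: stup_def sorted_sort_id)
        ultimately show False using ij by simp
      qed
      then show "permutations_of_multiset (mset i) \<inter> permutations_of_multiset (mset j) = {}"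
        unfolding permutations_of_multiset_def by auto
    qed
  qed
  also have "\<dots> = (\<Sum>ys\<in>stup n s. card (permutations_of_multiset (mset ys)) * g (mset ys))"
  proof (rule sum.cong[OF refl])
    fix ys
    have "(\<Sum>xs\<in>permutations_of_multiset (mset ys). g (mset xs)) = (\<Sum>xs\<in>permutations_of_multiset (mset ys). g (mset ys))"
      by (rule sum.cong[OF refl]) (simp add: permutations_of_multiset_def)
    then show "(\<Sum>xs\<in>permutations_of_multiset (mset ys). g (mset xs)) = card (permutations_of_multiset (mset ys)) * g (mset ys)"
      by simp
  qed
  finally show ?thesis .
qed

lemma multinom_card:
  assumes "set ys \<subseteq> {..K}"
  shows "multinom (length ys) (\<lambda>a. count_list ys a) K = card (permutations_of_multiset (mset ys))"
proof -
  have "(\<Prod>a\<le>K. fact (count_list ys a)) = (\<Prod>a\<in>set ys. fact (count_list ys a))"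
    by (rule prod.mono_neutral_right) (use assms in \<open>auto simp: count_list_0_iff\<close>)
  also have "\<dots> = (\<Prod>x\<in>set_mset (mset ys). fact (count (mset ys) x))"
    by (simp add: count_mset)
  finally have eq: "(\<Prod>a\<le>K. fact (count_list ys a)) = (\<Prod>x\<in>set_mset (mset ys). fact (count (mset ys) x))" .
  show ?thesis unfolding multinom_def card_permutations_of_multiset(1) eq size_mset ..
qed

lemma coeff_power_sorted:
  assumes "s \<le> K"
  shows "coeff (p ^ n) s = (\<Sum>ys\<in>stup n s. multinom n (\<lambda>a. count_list ys a) K * prod_list (map (coeff p) ys))"
proof -
  have pl: "prod_list (map (coeff p) xs) = prod_mset (image_mset (coeff p) (mset xs))" for xs
    by (simp flip: prod_mset_prod_list)
  have "coeff (p ^ n) s = (\<Sum>xs\<in>tup n s. prod_mset (image_mset (coeff p) (mset xs)))"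
    unfolding coeff_power pl ..
  also have "\<dots> = (\<Sum>ys\<in>stup n s. card (permutations_of_multiset (mset ys)) * prod_mset (image_mset (coeff p) (mset ys)))"
    by (rule sorted_group)
  also have "\<dots> = (\<Sum>ys\<in>stup n s. multinom n (\<lambda>a. count_list ys a) K * prod_list (map (coeff p) ys))"
  proof (rule sum.cong[OF refl])
    fix ys assume ys: "ys \<in> stup n s"
    then have "set ys \<subseteq> {..K}" "length ys = n" using tup_le[of ys n s] assms unfolding stup_def tup_def by auto
    then show "card (permutations_of_multiset (mset ys)) * prod_mset (image_mset (coeff p) (mset ys))
        = multinom n (\<lambda>a. count_list ys a) K * prod_list (map (coeff p) ys)"
      using multinom_card[of ys K] pl by simp
  qed
  finally show ?thesis .
qed




lemma bracket_poly:
  assumes lm: "l \<le> m" and hP: "\<And>i. coeff P i = Hcount m h i" and hQ: "\<And>i. coeff Q i = Ecount m h i"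
  shows "bracket m h l (int k) = (m choose l) * coeff (P ^ l * Q ^ (m - l)) k"
proof -
  have cP: "coeff P = Hcount m h" using hP by auto
  have cQ: "coeff Q = Ecount m h" using hQ by auto
  define F where "F = (\<lambda>xs. (m choose l)
      * multinom l (\<lambda>a. count_list (take l xs) a) k
      * multinom (m - l) (\<lambda>b. count_list (drop l xs) b) k
      * prod_list (map (Hcount m h) (take l xs))
      * prod_list (map (Ecount m h) (drop l xs)))"
  define PT where "PT = (\<Union>i\<in>{..k}. stup l i \<times> stup (m - l) (k - i))"
  have br: "bracket m h l (int k) = (\<Sum>xs\<in>bracket_tuples m l (int k). F xs)"
    unfolding bracket_def F_def by simp
  have BT: "bracket_tuples m l (int k) = (\<lambda>(a,b). a @ b) ` PT"
  proof (intro equalityI subsetI)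
    fix xs assume xs: "xs \<in> bracket_tuples m l (int k)"
    then have len: "length xs = m" and st: "sorted (take l xs)" "sorted (drop l xs)" and sm: "sum_list xs = k"
      unfolding bracket_tuples_def by auto
    have "sum_list (take l xs) + sum_list (drop l xs) = k"
      using sm by (metis append_take_drop_id sum_list_append)
    then have "(take l xs, drop l xs) \<in> stup l (sum_list (take l xs)) \<times> stup (m - l) (k - sum_list (take l xs))"
      using len st lm unfolding stup_def tup_def by auto
    moreover have "sum_list (take l xs) \<le> k" using \<open>sum_list (take l xs) + sum_list (drop l xs) = k\<close> by auto
    ultimately have "(take l xs, drop l xs) \<in> PT" unfolding PT_def by blast
    then show "xs \<in> (\<lambda>(a,b). a @ b) ` PT" by (metis (no_types, lifting) append_take_drop_id case_prod_conv image_eqI)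
  next
    fix xs assume "xs \<in> (\<lambda>(a,b). a @ b) ` PT"
    then obtain a b i where ab: "xs = a @ b" "i \<le> k" "a \<in> stup l i" "b \<in> stup (m - l) (k - i)"
      unfolding PT_def by auto
    then have la: "length a = l" and lb: "length b = m - l" and sa: "sum_list a = i" and sb: "sum_list b = k - i"
      and sta: "sorted a" and stb: "sorted b"
      unfolding stup_def tup_def by auto
    have sxs: "sum_list xs = k" using ab sa sb by auto
    have "set xs \<subseteq> {0..k}" using member_le_sum_list[of _ xs] sxs by auto
    then show "xs \<in> bracket_tuples m l (int k)"
      unfolding bracket_tuples_def using ab la lb sta stb sxs lm by auto
  qed
  have inj: "inj_on (\<lambda>(a,b). a @ b) PT"
  proof (rule inj_onI, clarify)
    fix a b a' b' assume "(a, b) \<in> PT" "(a', b') \<in> PT" "a @ b = a' @ b'"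
    moreover have "length a = l" "length a' = l" using calculation unfolding PT_def stup_def tup_def by auto
    ultimately show "a = a' \<and> b = b'" by (simp add: append_eq_append_conv)
  qed
  have FPT: "F (a @ b) = (m choose l) * (multinom l (\<lambda>x. count_list a x) k * prod_list (map (coeff P) a))
            * (multinom (m - l) (\<lambda>x. count_list b x) k * prod_list (map (coeff Q) b))"
    if "length a = l" for a b
    using that unfolding F_def cP cQ by (simp add: algebra_simps)
  have "(\<Sum>xs\<in>bracket_tuples m l (int k). F xs) = (\<Sum>p\<in>PT. F ((\<lambda>(a,b). a @ b) p))"
    unfolding BT sum.reindex[OF inj] comp_def ..
  also have "\<dots> = (\<Sum>i\<in>{..k}. \<Sum>p\<in>stup l i \<times> stup (m - l) (k - i). F ((\<lambda>(a,b). a @ b) p))"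
    unfolding PT_def
  proof (rule sum.UNION_disjoint)
    show "finite {..k}" by simp
    show "\<forall>i\<in>{..k}. finite (stup l i \<times> stup (m - l) (k - i))" by (simp add: finite_stup)
    show "\<forall>i\<in>{..k}. \<forall>j\<in>{..k}. i \<noteq> j \<longrightarrow>
        (stup l i \<times> stup (m - l) (k - i)) \<inter> (stup l j \<times> stup (m - l) (k - j)) = {}"
      unfolding stup_def tup_def by auto
  qed
  also have "\<dots> = (\<Sum>i\<in>{..k}. (m choose l) * (coeff (P ^ l) i * coeff (Q ^ (m - l)) (k - i)))"
  proof (rule sum.cong[OF refl])
    fix i assume i: "i \<in> {..k}"
    have "(\<Sum>p\<in>stup l i \<times> stup (m - l) (k - i). F ((\<lambda>(a,b). a @ b) p))
        = (\<Sum>a\<in>stup l i. \<Sum>b\<in>stup (m - l) (k - i). (m choose l) * ((multinom l (\<lambda>x. count_list a x) k * prod_list (map (coeff P) a))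
            * (multinom (m - l) (\<lambda>x. count_list b x) k * prod_list (map (coeff Q) b))))"
    proof -
      have "(\<Sum>p\<in>stup l i \<times> stup (m - l) (k - i). F ((\<lambda>(a,b). a @ b) p))
        = (\<Sum>(a,b)\<in>stup l i \<times> stup (m - l) (k - i). (m choose l) * ((multinom l (\<lambda>x. count_list a x) k * prod_list (map (coeff P) a))
            * (multinom (m - l) (\<lambda>x. count_list b x) k * prod_list (map (coeff Q) b))))"
        by (rule sum.cong) (auto simp: FPT stup_def tup_def)
      then show ?thesis by (simp add: sum.cartesian_product)
    qed
    also have "\<dots> = (m choose l) * ((\<Sum>a\<in>stup l i. multinom l (\<lambda>x. count_list a x) k * prod_list (map (coeff P) a))
            * (\<Sum>b\<in>stup (m - l) (k - i). multinom (m - l) (\<lambda>x. count_list b x) k * prod_list (map (coeff Q) b)))"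
      by (subst sum_product) (simp only: sum_distrib_left)
    also have "\<dots> = (m choose l) * (coeff (P ^ l) i * coeff (Q ^ (m - l)) (k - i))"
      using i by (simp add: coeff_power_sorted[of _ k])
    finally show "(\<Sum>p\<in>stup l i \<times> stup (m - l) (k - i). F ((\<lambda>(a,b). a @ b) p))
        = (m choose l) * (coeff (P ^ l) i * coeff (Q ^ (m - l)) (k - i))" .
  qed
  also have "\<dots> = (m choose l) * coeff (P ^ l * Q ^ (m - l)) k"
    by (simp add: coeff_mult sum_distrib_left)
  finally show ?thesis using br by simp
qed

lemma bracket_neg: "bracket m h l (-1) = 0"
  unfolding bracket_def bracket_tuples_def by simp




definition blk :: "nat \<Rightarrow> nat \<Rightarrow> nat list option set" where
  "blk m j = insert (Some [j]) {Some [j,a] | a. a < m}"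

definition BB :: "nat \<Rightarrow> nat option \<Rightarrow> nat list option set" where
  "BB m i = (case i of None \<Rightarrow> {Some []} | Some j \<Rightarrow> blk m j)"

definition JJ :: "nat \<Rightarrow> nat option set" where
  "JJ m = insert None (Some ` {..<m})"

definition phi :: "nat \<Rightarrow> nat list option \<Rightarrow> nat list option" where
  "phi j = map_option (Cons j)"

lemma finite_blk: "finite (blk m j)"
proof -
  have "{Some [j,a] | a. a < m} = (\<lambda>a. Some [j,a]) ` {..<m}" by auto
  then show ?thesis unfolding blk_def by auto
qed

lemma union_BB: "(\<Union>i\<in>JJ m. BB m i) = tverts m 2 - {None}"
  unfolding JJ_def BB_def blk_def tverts2 by auto

lemma disj_BB: "disjoint_family_on (BB m) (JJ m)"
  unfolding disjoint_family_on_def JJ_def BB_def blk_def by auto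

lemma finite_BB: "\<forall>i\<in>JJ m. finite (BB m i)"
  unfolding JJ_def BB_def using finite_blk by auto

lemma finite_JJ: "finite (JJ m)" unfolding JJ_def by auto

lemma gen_fam_tree:
  assumes "F None \<subseteq> Pow {Some []}" "\<And>j. j < m \<Longrightarrow> gen (F (Some j)) = g"
    "\<And>j. j < m \<Longrightarrow> F (Some j) \<subseteq> Pow (blk m j)"
  shows "gen (fam (JJ m) (BB m) F) = gen (F None) * g ^ m"
proof -
  have "gen (fam (JJ m) (BB m) F) = (\<Prod>i\<in>JJ m. gen (F i))"
    by (rule gen_prod[OF finite_JJ finite_BB disj_BB]) (use assms in \<open>auto simp: JJ_def BB_def\<close>)
  also have "\<dots> = gen (F None) * (\<Prod>i\<in>Some ` {..<m}. gen (F i))"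
    unfolding JJ_def by (subst prod.insert) auto
  also have "(\<Prod>i\<in>Some ` {..<m}. gen (F i)) = (\<Prod>j\<in>{..<m}. gen (F (Some j)))"
    by (subst prod.reindex) auto
  also have "\<dots> = (\<Prod>j\<in>{..<m}. g)" using assms by simp
  finally show ?thesis by simp
qed

lemma fam_mem:
  "S \<in> fam (JJ m) (BB m) F \<longleftrightarrow> S \<subseteq> tverts m 2 - {None} \<and> S \<inter> {Some []} \<in> F None \<and>
      (\<forall>j<m. S \<inter> blk m j \<in> F (Some j))"
  unfolding fam_def union_BB by (auto simp: JJ_def BB_def)

lemma cN_inter: "cN m (S \<inter> blk m j) j = cN m S j"
  unfolding cN_def blk_def by auto

lemma cI_inter: "cI m (S \<inter> blk m j) j = cI m S j"
  unfolding cI_def blk_def by auto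

lemma gen_image:
  assumes "inj f" "G = (\<lambda>S. f ` S) ` F"
  shows "gen G = gen F"
proof -
  have inj: "inj_on (\<lambda>S. f ` S) F" using assms(1) by (simp add: inj_on_def inj_image_eq_iff)
  show ?thesis unfolding gen_def assms(2) sum.reindex[OF inj] comp_def
    using assms(1) by (simp add: card_image inj_on_subset)
qed

lemma inj_phi: "inj (phi j)"
  unfolding phi_def by (simp add: option.inj_map)

lemma phi_img_mem: "Some [j] \<in> phi j ` S \<longleftrightarrow> Some [] \<in> S" "Some [j,a] \<in> phi j ` S \<longleftrightarrow> Some [a] \<in> S"
proof -
  have "Some [j] = phi j (Some [])" "Some [j,a] = phi j (Some [a])" by (simp_all add: phi_def)
  then show "Some [j] \<in> phi j ` S \<longleftrightarrow> Some [] \<in> S" "Some [j,a] \<in> phi j ` S \<longleftrightarrow> Some [a] \<in> S"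
    using inj_image_mem_iff[OF inj_phi] by metis+
qed

lemma phi_sub: "S \<subseteq> tverts m 1 - {None} \<Longrightarrow> phi j ` S \<subseteq> blk m j"
  unfolding phi_def blk_def tverts1 by auto

lemma phi_pre: "T \<subseteq> blk m j \<Longrightarrow> phi j -` T \<subseteq> tverts m 1 - {None} \<and> T = phi j ` (phi j -` T)"
proof
  assume T: "T \<subseteq> blk m j"
  show "phi j -` T \<subseteq> tverts m 1 - {None}" using T unfolding phi_def blk_def tverts1 by auto
  have "T \<subseteq> range (phi j)"
  proof
    fix x assume "x \<in> T"
    then have "x = Some [j] \<or> (\<exists>a. x = Some [j,a])" using T unfolding blk_def by auto
    moreover have "Some [j] = phi j (Some [])" "\<And>a. Some [j,a] = phi j (Some [a])" by (simp_all add: phi_def)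
    ultimately show "x \<in> range (phi j)" by auto
  qed
  then show "T = phi j ` (phi j -` T)" by (simp add: image_vimage_eq Int_absorb2)
qed

lemma block_family:
  assumes "\<And>S. S \<subseteq> tverts m 1 - {None} \<Longrightarrow> S \<in> F1 \<longleftrightarrow> Q (Some [] \<in> S) (\<lambda>a. Some [a] \<in> S)"
    and "F1 \<subseteq> Pow (tverts m 1 - {None})"
    and "\<And>T. T \<subseteq> blk m j \<Longrightarrow> T \<in> F2 \<longleftrightarrow> Q (Some [j] \<in> T) (\<lambda>a. Some [j,a] \<in> T)"
    and "F2 \<subseteq> Pow (blk m j)"
  shows "F2 = (\<lambda>S. phi j ` S) ` F1"
proof (intro equalityI subsetI)
  fix T assume T: "T \<in> F2"
  then have Tb: "T \<subseteq> blk m j" using assms(4) by auto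
  have pre: "phi j -` T \<subseteq> tverts m 1 - {None}" "T = phi j ` (phi j -` T)" using phi_pre[OF Tb] by auto
  have "Q (Some [j] \<in> T) (\<lambda>a. Some [j,a] \<in> T)" using assms(3)[OF Tb] T by simp
  then have "Q (Some [] \<in> phi j -` T) (\<lambda>a. Some [a] \<in> phi j -` T)" by (simp add: phi_def)
  then have "phi j -` T \<in> F1" using assms(1)[OF pre(1)] by simp
  then show "T \<in> (\<lambda>S. phi j ` S) ` F1" using pre(2) by blast
next
  fix T assume "T \<in> (\<lambda>S. phi j ` S) ` F1"
  then obtain S where S: "S \<in> F1" "T = phi j ` S" by auto
  have Sv: "S \<subseteq> tverts m 1 - {None}" using S assms(2) by auto
  have Tb: "T \<subseteq> blk m j" using phi_sub[OF Sv] S by simp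
  have "Q (Some [] \<in> S) (\<lambda>a. Some [a] \<in> S)" using assms(1)[OF Sv] S by simp
  then have "Q (Some [j] \<in> T) (\<lambda>a. Some [j,a] \<in> T)" using S(2) phi_img_mem by simp
  then show "T \<in> F2" using assms(3)[OF Tb] by simp
qed




definition EF1 :: "nat \<Rightarrow> nat list option set set" where
  "EF1 m = {S. S \<subseteq> tverts m 1 - {None} \<and> power_dominating (tverts m 1) (tadj m 1) S}"
definition HF1 :: "nat \<Rightarrow> nat list option set set" where
  "HF1 m = {S. S \<subseteq> tverts m 1 - {None} \<and> \<not> power_dominating (tverts m 1) (tadj m 1) S
      \<and> power_dominating (tverts m 1) (tadj m 1) (insert None S)}"
definition NF1 :: "nat \<Rightarrow> nat list option set set" where
  "NF1 m = {S. S \<subseteq> tverts m 1 - {None} \<and> power_dominating (tverts m 1) (tadj m 1) (insert None S)}"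
definition FNb :: "nat \<Rightarrow> nat \<Rightarrow> nat list option set set" where
  "FNb m j = {T. T \<subseteq> blk m j \<and> cN m T j}"
definition FHb :: "nat \<Rightarrow> nat \<Rightarrow> nat list option set set" where
  "FHb m j = {T. T \<subseteq> blk m j \<and> cN m T j \<and> \<not> cI m T j}"

lemma finite_V1': "finite (tverts m 1 - {None})" using finite_tverts1 by auto
lemma finite_V2': "finite (tverts m 2 - {None})" using finite_tverts2 by auto

lemma fin_fam1: "F \<subseteq> Pow (tverts m 1 - {None}) \<Longrightarrow> finite F"
  using finite_V1' by (meson finite_Pow_iff finite_subset)
lemma fin_fam2: "F \<subseteq> Pow (tverts m 2 - {None}) \<Longrightarrow> finite F"
  using finite_V2' by (meson finite_Pow_iff finite_subset)

lemmas pd1_iff' = pd1_iff[unfolded One_nat_def]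
lemmas pd1N_iff' = pd1N_iff[unfolded One_nat_def]

lemma gen_FNb:
  assumes m: "m \<ge> 2" shows "gen (FNb m j) = gen (NF1 m)"
proof (rule gen_image[OF inj_phi])
  show "FNb m j = (\<lambda>S. phi j ` S) ` NF1 m"
    by (rule block_family[where Q = "\<lambda>r L. r \<or> (\<forall>a<m. \<forall>b<m. \<not> L a \<longrightarrow> \<not> L b \<longrightarrow> a = b)"])
      (auto simp: NF1_def FNb_def cN_def pd1N_iff'[OF m])
qed

lemma gen_FHb:
  assumes m: "m \<ge> 2" shows "gen (FHb m j) = gen (HF1 m)"
proof (rule gen_image[OF inj_phi])
  show "FHb m j = (\<lambda>S. phi j ` S) ` HF1 m"
    by (rule block_family[where Q = "\<lambda>r L. \<not> (r \<or> (\<forall>a<m. L a)) \<and> (r \<or> (\<forall>a<m. \<forall>b<m. \<not> L a \<longrightarrow> \<not> L b \<longrightarrow> a = b))"])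
      (auto simp: HF1_def FHb_def cN_def cI_def pd1N_iff'[OF m] pd1_iff'[OF m])
qed

lemma NF1_split: assumes m: "m \<ge> 2" shows "NF1 m = EF1 m \<union> HF1 m" "EF1 m \<inter> HF1 m = {}"
proof -
  have "S \<in> EF1 m \<Longrightarrow> S \<in> NF1 m" for S
    unfolding EF1_def NF1_def using pd1_iff'[OF m] pd1N_iff'[OF m] by auto
  then show "NF1 m = EF1 m \<union> HF1 m" unfolding NF1_def HF1_def EF1_def by blast
  show "EF1 m \<inter> HF1 m = {}" unfolding EF1_def HF1_def by auto
qed

lemma coeff_E1: "coeff (gen (EF1 m)) i = Ecount m 1 i"
proof -
  have "coeff (gen (EF1 m)) i = card {S\<in>EF1 m. card S = i}"
    by (rule coeff_gen, rule fin_fam1) (auto simp: EF1_def)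
  also have "{S\<in>EF1 m. card S = i} = {S. S \<subseteq> tverts m 1 - {None} \<and> card S = i \<and>
                         power_dominating (tverts m 1) (tadj m 1) S}" unfolding EF1_def by auto
  finally show ?thesis unfolding Ecount_def .
qed

lemma coeff_H1: "coeff (gen (HF1 m)) i = Hcount m 1 i"
proof -
  have "coeff (gen (HF1 m)) i = card {S\<in>HF1 m. card S = i}"
    by (rule coeff_gen, rule fin_fam1) (auto simp: HF1_def)
  also have "{S\<in>HF1 m. card S = i} = {S. S \<subseteq> tverts m 1 - {None} \<and> card S = i \<and>
                         \<not> power_dominating (tverts m 1) (tadj m 1) S \<and>
                         power_dominating (tverts m 1) (tadj m 1) (insert None S)}" unfolding HF1_def by auto
  finally show ?thesis unfolding Hcount_def .
qed

lemma gen_empty_fam: "gen {{}} = 1"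
  using monom_eq_1 by (simp add: gen_def del: One_nat_def)

lemma gen_root_fam: "gen {{Some []}} = monom 1 1"
  by (simp add: gen_def)




lemma coeff_of_nat_mult: "coeff (of_nat c * p) n = c * coeff (p :: nat poly) n"
  by (simp add: of_nat_poly)

lemma FHb_sub: "FHb m j \<subseteq> Pow (blk m j)" unfolding FHb_def by auto
lemma FNb_sub: "FNb m j \<subseteq> Pow (blk m j)" unfolding FNb_def by auto

theorem mainTheorem6:
  fixes m k :: nat
  assumes "m \<ge> 2"
  shows "Hcount m 2 k = bracket m 1 m (int k) \<and>
         Ecount m 2 k = (\<Sum>l<m. bracket m 1 l (int k)) + (\<Sum>l\<le>m. bracket m 1 l (int k - 1))"
proof -
  note m = assms
  define Hp where "Hp = gen (HF1 m)"
  define Ep where "Ep = gen (EF1 m)"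
  define Np where "Np = gen (NF1 m)"
  have finE: "finite (EF1 m)" by (rule fin_fam1) (auto simp: EF1_def)
  have finH: "finite (HF1 m)" by (rule fin_fam1) (auto simp: HF1_def)
  have Np: "Np = Hp + Ep"
    unfolding Np_def Hp_def Ep_def NF1_split(1)[OF m] using gen_union[OF finE finH NF1_split(2)[OF m]]
    by (simp add: add.commute)
  have br: "bracket m 1 l (int n) = (m choose l) * coeff (Hp ^ l * Ep ^ (m - l)) n" if "l \<le> m" for l n
    by (rule bracket_poly[OF that]) (simp_all add: Hp_def Ep_def coeff_H1 coeff_E1)
  have binom: "(\<Sum>l\<le>m. bracket m 1 l (int n)) = coeff (Np ^ m) n" for n
  proof -
    have "Np ^ m = (\<Sum>l\<le>m. of_nat (m choose l) * Hp ^ l * Ep ^ (m - l))"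
      unfolding Np by (rule binomial_ring)
    then have "coeff (Np ^ m) n = (\<Sum>l\<le>m. (m choose l) * coeff (Hp ^ l * Ep ^ (m - l)) n)"
      by (simp add: coeff_sum mult.assoc coeff_of_nat_mult)
    then show ?thesis using br by simp
  qed
  have brm: "bracket m 1 m (int n) = coeff (Hp ^ m) n" for n using br[of m n] by simp
  define HF2 where "HF2 = {S. S \<subseteq> tverts m 2 - {None} \<and> \<not> power_dominating (tverts m 2) (tadj m 2) S
      \<and> power_dominating (tverts m 2) (tadj m 2) (insert None S)}"
  define FH where "FH = (\<lambda>i. case i of None \<Rightarrow> {{}} | Some j \<Rightarrow> FHb m j)"
  define FX where "FX = (\<lambda>i. case i of None \<Rightarrow> {{Some []}} | Some j \<Rightarrow> FNb m j)"
  define FW where "FW = (\<lambda>i. case i of None \<Rightarrow> {{}} | Some j \<Rightarrow> FNb m j)"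
  define EF2 where "EF2 = {S. S \<subseteq> tverts m 2 - {None} \<and> power_dominating (tverts m 2) (tadj m 2) S}"
  define Y where "Y = {S. S \<subseteq> tverts m 2 - {None} \<and> Some [] \<notin> S \<and> (\<forall>j<m. cN m S j) \<and> (\<exists>j<m. cI m S j)}"
  have rootint: "S \<inter> {Some []} = {} \<longleftrightarrow> Some [] \<notin> S" "S \<inter> {Some []} = {Some []} \<longleftrightarrow> Some [] \<in> S" for S
    by auto
  have HF2_eq: "HF2 = fam (JJ m) (BB m) FH"
  proof (rule set_eqI)
    fix S show "S \<in> HF2 \<longleftrightarrow> S \<in> fam (JJ m) (BB m) FH"
    proof (cases "S \<subseteq> tverts m 2 - {None}")
      case True
      have "S \<in> fam (JJ m) (BB m) FH \<longleftrightarrow> Some [] \<notin> S \<and> (\<forall>j<m. cN m S j \<and> \<not> cI m S j)"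
        using True by (auto simp: fam_mem FH_def FHb_def cN_inter cI_inter rootint)
      then show ?thesis unfolding HF2_def mem_Collect_eq pd2_iff[OF m True] pd2N_iff[OF m True] using True by blast
    next
      case False
      then show ?thesis unfolding HF2_def by (auto simp: fam_mem)
    qed
  qed
  have X_eq: "{S. S \<subseteq> tverts m 2 - {None} \<and> Some [] \<in> S \<and> (\<forall>j<m. cN m S j)} = fam (JJ m) (BB m) FX"
    by (auto simp: fam_mem FX_def FNb_def cN_inter rootint)
  have W_eq: "{S. S \<subseteq> tverts m 2 - {None} \<and> Some [] \<notin> S \<and> (\<forall>j<m. cN m S j)} = fam (JJ m) (BB m) FW"
    by (auto simp: fam_mem FW_def FNb_def cN_inter rootint)
  have EF2_eq: "EF2 = fam (JJ m) (BB m) FX \<union> Y"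
  proof (rule set_eqI)
    fix S show "S \<in> EF2 \<longleftrightarrow> S \<in> fam (JJ m) (BB m) FX \<union> Y"
    proof (cases "S \<subseteq> tverts m 2 - {None}")
      case True
      show ?thesis unfolding EF2_def Y_def X_eq[symmetric] mem_Collect_eq Un_iff pd2_iff[OF m True] by blast
    next
      case False
      then show ?thesis unfolding EF2_def Y_def X_eq[symmetric] by blast
    qed
  qed
  have W_split: "fam (JJ m) (BB m) FW = Y \<union> HF2"
  proof (rule set_eqI)
    fix S show "S \<in> fam (JJ m) (BB m) FW \<longleftrightarrow> S \<in> Y \<union> HF2"
    proof (cases "S \<subseteq> tverts m 2 - {None}")
      case True
      show ?thesis unfolding W_eq[symmetric] Y_def HF2_def mem_Collect_eq Un_iff pd2_iff[OF m True] pd2N_iff[OF m True]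
        by blast
    next
      case False
      then show ?thesis unfolding W_eq[symmetric] Y_def HF2_def by blast
    qed
  qed
  have finX: "finite (fam (JJ m) (BB m) FX)" by (rule fin_fam2) (auto simp: fam_mem)
  have finY: "finite Y" by (rule fin_fam2) (auto simp: Y_def)
  have finHF2: "finite HF2" by (rule fin_fam2) (auto simp: HF2_def)
  have finEF2: "finite EF2" by (rule fin_fam2) (auto simp: EF2_def)
  have genH2: "gen HF2 = Hp ^ m"
  proof -
    have "gen (fam (JJ m) (BB m) FH) = gen (FH None) * Hp ^ m"
      by (rule gen_fam_tree) (auto simp: FH_def FHb_sub gen_FHb[OF m] Hp_def)
    then show ?thesis unfolding HF2_eq by (simp add: FH_def gen_empty_fam)
  qed
  have genX: "gen (fam (JJ m) (BB m) FX) = monom 1 1 * Np ^ m"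
  proof -
    have "gen (fam (JJ m) (BB m) FX) = gen (FX None) * Np ^ m"
      by (rule gen_fam_tree) (auto simp: FX_def FNb_sub gen_FNb[OF m] Np_def)
    moreover have "gen (FX None) = monom 1 1" unfolding FX_def by (simp only: option.case gen_root_fam)
    ultimately show ?thesis by (simp only:)
  qed
  have genW: "gen (fam (JJ m) (BB m) FW) = Np ^ m"
  proof -
    have "gen (fam (JJ m) (BB m) FW) = gen (FW None) * Np ^ m"
      by (rule gen_fam_tree) (auto simp: FW_def FNb_sub gen_FNb[OF m] Np_def)
    then show ?thesis by (simp add: FW_def gen_empty_fam)
  qed
  have genEF2: "gen EF2 = monom 1 1 * Np ^ m + gen Y"
  proof -
    have "fam (JJ m) (BB m) FX \<inter> Y = {}" by (auto simp: Y_def fam_mem FX_def)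
    then have "gen EF2 = gen (fam (JJ m) (BB m) FX) + gen Y" unfolding EF2_eq by (rule gen_union[OF finX finY])
    then show ?thesis unfolding genX .
  qed
  have genY: "gen Y + Hp ^ m = Np ^ m"
  proof -
    have "Y \<inter> HF2 = {}"
    proof (rule ccontr)
      assume "Y \<inter> HF2 \<noteq> {}"
      then obtain S where S: "S \<in> Y" "S \<in> HF2" by blast
      then have Sv: "S \<subseteq> tverts m 2 - {None}" unfolding Y_def by blast
      show False using S unfolding Y_def HF2_def mem_Collect_eq pd2_iff[OF m Sv] by blast
    qed
    then show ?thesis using genW unfolding W_split genH2[symmetric] by (simp add: gen_union[OF finY finHF2])
  qed
  have H2: "Hcount m 2 k = coeff (gen HF2) k"
  proof -
    have "coeff (gen HF2) k = card {S\<in>HF2. card S = k}" by (rule coeff_gen[OF finHF2])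
    also have "{S\<in>HF2. card S = k} = {S. S \<subseteq> tverts m 2 - {None} \<and> card S = k \<and>
                         \<not> power_dominating (tverts m 2) (tadj m 2) S \<and>
                         power_dominating (tverts m 2) (tadj m 2) (insert None S)}" unfolding HF2_def by auto
    finally show ?thesis unfolding Hcount_def by simp
  qed
  have E2: "Ecount m 2 k = coeff (gen EF2) k"
  proof -
    have "coeff (gen EF2) k = card {S\<in>EF2. card S = k}" by (rule coeff_gen[OF finEF2])
    also have "{S\<in>EF2. card S = k} = {S. S \<subseteq> tverts m 2 - {None} \<and> card S = k \<and>
                         power_dominating (tverts m 2) (tadj m 2) S}" unfolding EF2_def by auto
    finally show ?thesis unfolding Ecount_def by simp
  qed
  have part1: "Hcount m 2 k = bracket m 1 m (int k)" using H2 genH2 brm by simp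
  have sumY: "coeff (gen Y) k = (\<Sum>l<m. bracket m 1 l (int k))"
  proof -
    have "(\<Sum>l\<le>m. bracket m 1 l (int k)) = (\<Sum>l<m. bracket m 1 l (int k)) + bracket m 1 m (int k)"
      by (simp add: lessThan_Suc_atMost[symmetric])
    moreover have "coeff (gen Y) k + coeff (Hp ^ m) k = coeff (Np ^ m) k"
      using genY by (metis coeff_add)
    ultimately show ?thesis using binom[of k] brm[of k] by simp
  qed
  have sumX: "coeff (monom 1 1 * Np ^ m) k = (\<Sum>l\<le>m. bracket m 1 l (int k - 1))"
  proof (cases k)
    case 0
    then show ?thesis by (simp add: coeff_monom_mult bracket_neg)
  next
    case (Suc k')
    then have "int k - 1 = int k'" by simp
    then show ?thesis using binom[of k'] Suc by (simp add: coeff_monom_mult)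
  qed
  have part2: "Ecount m 2 k = (\<Sum>l<m. bracket m 1 l (int k)) + (\<Sum>l\<le>m. bracket m 1 l (int k - 1))"
    using E2 genEF2 sumX sumY by simp
  show ?thesis using part1 part2 by simp
qed


end
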